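(* Let $X=(X,d,\mathcal M,\mu)$ be a metric measure space and $1\le p<\infty$. Let $a\in X_0$ be such that for every $\lambda>0$, $B(a,\lambda)\in\mathcal M$ and $\mu(B(a,\lambda))>0$, and $\mu(B(a,\lambda'))<\infty$ for some $\lambda'>0$. Suppose that $A\subset L^p(X)$ and $\xi:A\to(0,\infty)$ is a function such that every $f\in A$ satisfies $f(x)=0$ for almost every $x\in B(a,\xi(f))$, and that $B$ is a $Z$-set in $L^p(X)$. If $A\cup B$ is closed in $L^p(X)$, then $A\cup B$ is a $Z$-set in $L^p(X)$.
   Context: A metric measure space $X=(X,d,\mathcal M,\mu)$ consists of a metric space $(X,d)$, a $\sigma$-algebra $\mathcal M$ and a measure $\mu$ on $\mathcal M$. $X_0=\{x\in X:\{x\}\in\mathcal M,\ \mu(\{x\})=0\}$, $B(a,\lambda)=\{x:d(a,x)<\lambda\}$. $L^p(X)$ is the Banach space of $\mathcal M$-measurable $f:X\to\mathbb R$ with $\|f\|_p=(\int_X|f|^pd\mu)^{1/p}<\infty$, modulo a.e. equality. For maps $f,g:Z\to M$ and an open cover $\mathcal U$ of $M$, $f$ is $\mathcal U$-close to $g$ if for each $z$ some $U\in\mathcal U$ contains $\{f(z),g(z)\}$. A closed set $A$ in a space $M$ is a $Z$-set if for every open cover $\mathcal U$ of $M$ there is a continuous $f:M\to M$ that is $\mathcal U$-close to the identity with $f(M)\cap A=\emptyset$. *)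

theory Defs
  imports "HOL-Analysis.Analysis"
begin

definition Z_set :: "'b topology \<Rightarrow> 'b set \<Rightarrow> bool" where
  "Z_set T A \<longleftrightarrow> closedin T A \<and>
     (\<forall>\<U>. (\<forall>U\<in>\<U>. openin T U) \<and> \<Union>\<U> = topspace T \<longrightarrow>
        (\<exists>f. continuous_map T T f \<and>
             (\<forall>z\<in>topspace T. \<exists>U\<in>\<U>. f z \<in> U \<and> z \<in> U) \<and>
             f ` topspace T \<inter> A = {}))"

definition Lp_fun :: "'a measure \<Rightarrow> real \<Rightarrow> ('a \<Rightarrow> real) set" where
  "Lp_fun M p = {f. f \<in> borel_measurable M \<and> integrable M (\<lambda>x. \<bar>f x\<bar> powr p)}"

definition Lp_norm :: "'a measure \<Rightarrow> real \<Rightarrow> ('a \<Rightarrow> real) \<Rightarrow> real" where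
  "Lp_norm M p f = (\<integral>x. \<bar>f x\<bar> powr p \<partial>M) powr (1 / p)"

definition Lp_class :: "'a measure \<Rightarrow> real \<Rightarrow> ('a \<Rightarrow> real) \<Rightarrow> ('a \<Rightarrow> real) set" where
  "Lp_class M p f = {g \<in> Lp_fun M p. AE x in M. g x = f x}"

definition Lp_space :: "'a measure \<Rightarrow> real \<Rightarrow> ('a \<Rightarrow> real) set set" where
  "Lp_space M p = Lp_class M p ` Lp_fun M p"

definition Lp_dist :: "'a measure \<Rightarrow> real \<Rightarrow> ('a \<Rightarrow> real) set \<Rightarrow> ('a \<Rightarrow> real) set \<Rightarrow> real" where
  "Lp_dist M p F G = Lp_norm M p (\<lambda>x. (SOME f. f \<in> F) x - (SOME g. g \<in> G) x)"

definition Lp_topology :: "'a measure \<Rightarrow> real \<Rightarrow> ('a \<Rightarrow> real) set topology" where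
  "Lp_topology M p = Metric_space.mtopology (Lp_space M p) (Lp_dist M p)"

definition mball_of :: "'a measure \<Rightarrow> ('a \<Rightarrow> 'a \<Rightarrow> real) \<Rightarrow> 'a \<Rightarrow> real \<Rightarrow> 'a set" where
  "mball_of M d a r = {x \<in> space M. d a x < r}"

definition X0 :: "'a measure \<Rightarrow> 'a set" where
  "X0 M = {x \<in> space M. {x} \<in> sets M \<and> emeasure M {x} = 0}"

end

theory Submission
  imports Defs
begin


lemma powr_convex_ineq:
  fixes p u v t :: real
  assumes p: "1 \<le> p" and u: "0 \<le> u" and v: "0 \<le> v" and t: "0 \<le> t" "t \<le> 1"
  shows "(t * u + (1 - t) * v) powr p \<le> t * u powr p + (1 - t) * v powr p"
proof -
  have key: "(c * w) powr p \<le> c * w powr p" if "0 \<le> c" "c \<le> 1" "0 \<le> w" for c w :: real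
  proof -
    have "c powr p \<le> c"
      using that p by (cases "c = 0") (auto intro: powr_le_one_le)
    then have "c powr p * w powr p \<le> c * w powr p"
      by (rule mult_right_mono) simp
    then show ?thesis using that by (simp add: powr_mult)
  qed
  show ?thesis
  proof (cases "u = 0 \<or> v = 0")
    case True
    then show ?thesis
    proof
      assume "u = 0" then show ?thesis using key[of "1-t" v] t v p by simp
    next
      assume "v = 0" then show ?thesis using key[of t u] t u p by simp
    qed
  next
    case False
    then have "u \<in> {0<..}" "v \<in> {0<..}" using u v by auto
    from convex_onD[OF powr_convex[OF p] _ _ this(2) this(1), of t] t
    show ?thesis by (simp add: algebra_simps)
  qed
qed

locale Lpl = fixes M :: "'a measure" and p :: real assumes p1: "1 \<le> p"
begin

lemma p_pos: "0 < p" using p1 by simp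

lemma Lp_funI: "f \<in> borel_measurable M \<Longrightarrow> integrable M (\<lambda>x. \<bar>f x\<bar> powr p) \<Longrightarrow> f \<in> Lp_fun M p"
  by (simp add: Lp_fun_def)
lemma Lp_fun_meas: "f \<in> Lp_fun M p \<Longrightarrow> f \<in> borel_measurable M"
  by (simp add: Lp_fun_def)
lemma Lp_fun_int: "f \<in> Lp_fun M p \<Longrightarrow> integrable M (\<lambda>x. \<bar>f x\<bar> powr p)"
  by (simp add: Lp_fun_def)

lemma Lp_fun_bound:
  assumes f: "f \<in> Lp_fun M p" and g: "g \<in> borel_measurable M"
    and le: "\<And>x. x \<in> space M \<Longrightarrow> \<bar>g x\<bar> \<le> \<bar>f x\<bar>"
  shows "g \<in> Lp_fun M p"
proof (rule Lp_funI[OF g])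
  show "integrable M (\<lambda>x. \<bar>g x\<bar> powr p)"
  proof (rule Bochner_Integration.integrable_bound[OF Lp_fun_int[OF f]])
    show "(\<lambda>x. \<bar>g x\<bar> powr p) \<in> borel_measurable M" using g by measurable
    show "AE x in M. norm (\<bar>g x\<bar> powr p) \<le> norm (\<bar>f x\<bar> powr p)"
      using le p1 by (auto intro!: AE_I2 powr_mono2)
  qed
qed

lemma Lp_norm_nonneg: "0 \<le> Lp_norm M p f"
  by (simp add: Lp_norm_def)

lemma Lp_norm_mono:
  assumes f: "f \<in> Lp_fun M p" and g: "g \<in> borel_measurable M"
    and le: "\<And>x. x \<in> space M \<Longrightarrow> \<bar>g x\<bar> \<le> \<bar>f x\<bar>"
  shows "Lp_norm M p g \<le> Lp_norm M p f"
proof -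
  have gL: "g \<in> Lp_fun M p" by (rule Lp_fun_bound[OF assms])
  have "(\<integral>x. \<bar>g x\<bar> powr p \<partial>M) \<le> (\<integral>x. \<bar>f x\<bar> powr p \<partial>M)"
    using le p1 by (intro integral_mono Lp_fun_int gL f) (auto intro!: powr_mono2)
  moreover have "0 \<le> (\<integral>x. \<bar>g x\<bar> powr p \<partial>M)" by simp
  ultimately show ?thesis unfolding Lp_norm_def using p1 by (intro powr_mono2) auto
qed

lemma Lp_fun_add:
  assumes f: "f \<in> Lp_fun M p" and g: "g \<in> Lp_fun M p"
  shows "(\<lambda>x. f x + g x) \<in> Lp_fun M p"
proof (rule Lp_funI)
  show fgm: "(\<lambda>x. f x + g x) \<in> borel_measurable M"
    using Lp_fun_meas[OF f] Lp_fun_meas[OF g] by measurable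
  show "integrable M (\<lambda>x. \<bar>f x + g x\<bar> powr p)"
  proof (rule Bochner_Integration.integrable_bound)
    show "integrable M (\<lambda>x. 2 powr p * (\<bar>f x\<bar> powr p + \<bar>g x\<bar> powr p))"
      using Lp_fun_int[OF f] Lp_fun_int[OF g] by auto
    show "(\<lambda>x. \<bar>f x + g x\<bar> powr p) \<in> borel_measurable M" using fgm by measurable
    show "AE x in M. norm (\<bar>f x + g x\<bar> powr p) \<le> norm (2 powr p * (\<bar>f x\<bar> powr p + \<bar>g x\<bar> powr p))"
    proof (rule AE_I2)
      fix x
      have "\<bar>f x + g x\<bar> powr p \<le> (\<bar>f x\<bar> + \<bar>g x\<bar>) powr p"
        using p1 by (intro powr_mono2) auto
      also have "\<dots> = (2 * ((1/2) * \<bar>f x\<bar> + (1 - 1/2) * \<bar>g x\<bar>)) powr p"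
        by (simp add: algebra_simps)
      also have "\<dots> = 2 powr p * ((1/2) * \<bar>f x\<bar> + (1 - 1/2) * \<bar>g x\<bar>) powr p"
        by (rule powr_mult)
      also have "\<dots> \<le> 2 powr p * ((1/2) * \<bar>f x\<bar> powr p + (1 - 1/2) * \<bar>g x\<bar> powr p)"
        by (intro mult_left_mono powr_convex_ineq p1) auto
      also have "\<dots> \<le> 2 powr p * (\<bar>f x\<bar> powr p + \<bar>g x\<bar> powr p)"
        using powr_ge_zero[of "\<bar>f x\<bar>" p] powr_ge_zero[of "\<bar>g x\<bar>" p]
        by (intro mult_left_mono) (simp_all add: field_simps)
      finally show "norm (\<bar>f x + g x\<bar> powr p) \<le> norm (2 powr p * (\<bar>f x\<bar> powr p + \<bar>g x\<bar> powr p))"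
        by simp
    qed
  qed
qed

lemma Lp_fun_cmult:
  assumes f: "f \<in> Lp_fun M p"
  shows "(\<lambda>x. c * f x) \<in> Lp_fun M p"
proof (rule Lp_funI)
  show "(\<lambda>x. c * f x) \<in> borel_measurable M" using Lp_fun_meas[OF f] by measurable
  have "integrable M (\<lambda>x. \<bar>c\<bar> powr p * \<bar>f x\<bar> powr p)" using Lp_fun_int[OF f] by auto
  then show "integrable M (\<lambda>x. \<bar>c * f x\<bar> powr p)" by (simp add: abs_mult powr_mult)
qed

lemma Lp_norm_cmult:
  assumes f: "f \<in> Lp_fun M p"
  shows "Lp_norm M p (\<lambda>x. c * f x) = \<bar>c\<bar> * Lp_norm M p f"
proof -
  have "(\<integral>x. \<bar>c * f x\<bar> powr p \<partial>M) = \<bar>c\<bar> powr p * (\<integral>x. \<bar>f x\<bar> powr p \<partial>M)"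
    by (simp add: abs_mult powr_mult)
  then have "Lp_norm M p (\<lambda>x. c * f x) = (\<bar>c\<bar> powr p) powr (1/p) * (\<integral>x. \<bar>f x\<bar> powr p \<partial>M) powr (1/p)"
    by (simp add: Lp_norm_def powr_mult)
  also have "(\<bar>c\<bar> powr p) powr (1/p) = \<bar>c\<bar>" using p_pos by (simp add: powr_powr)
  finally show ?thesis by (simp add: Lp_norm_def)
qed

lemma Lp_fun_diff:
  assumes f: "f \<in> Lp_fun M p" and g: "g \<in> Lp_fun M p"
  shows "(\<lambda>x. f x - g x) \<in> Lp_fun M p"
  using Lp_fun_add[OF f Lp_fun_cmult[OF g, of "-1"]] by simp

lemma Lp_norm_pow:
  assumes f: "f \<in> Lp_fun M p"
  shows "Lp_norm M p f powr p = (\<integral>x. \<bar>f x\<bar> powr p \<partial>M)"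
  using p_pos by (simp add: Lp_norm_def powr_powr)

lemma Lp_norm_eq_0:
  assumes f: "f \<in> Lp_fun M p"
  shows "Lp_norm M p f = 0 \<longleftrightarrow> (AE x in M. f x = 0)"
proof -
  have "Lp_norm M p f = 0 \<longleftrightarrow> (\<integral>x. \<bar>f x\<bar> powr p \<partial>M) = 0"
    using p_pos by (simp add: Lp_norm_def)
  also have "\<dots> \<longleftrightarrow> (AE x in M. \<bar>f x\<bar> powr p = 0)"
    by (rule integral_nonneg_eq_0_iff_AE[OF Lp_fun_int[OF f]]) simp
  also have "\<dots> \<longleftrightarrow> (AE x in M. f x = 0)" by simp
  finally show ?thesis .
qed

lemma Lp_norm_cong_AE:
  assumes f: "f \<in> borel_measurable M" and g: "g \<in> borel_measurable M" and ae: "AE x in M. f x = g x"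
  shows "Lp_norm M p f = Lp_norm M p g"
proof -
  have "(\<integral>x. \<bar>f x\<bar> powr p \<partial>M) = (\<integral>x. \<bar>g x\<bar> powr p \<partial>M)"
    using f g ae by (intro integral_cong_AE) auto
  then show ?thesis by (simp add: Lp_norm_def)
qed

lemma Lp_norm_triangle:
  assumes f: "f \<in> Lp_fun M p" and g: "g \<in> Lp_fun M p"
  shows "Lp_norm M p (\<lambda>x. f x + g x) \<le> Lp_norm M p f + Lp_norm M p g"
proof -
  define a where "a = Lp_norm M p f"
  define b where "b = Lp_norm M p g"
  have a0: "0 \<le> a" and b0: "0 \<le> b" by (simp_all add: a_def b_def Lp_norm_nonneg)
  have fm: "f \<in> borel_measurable M" and gm: "g \<in> borel_measurable M"
    using f g by (simp_all add: Lp_fun_meas)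
  show ?thesis
  proof (cases "a = 0 \<or> b = 0")
    case True
    then show ?thesis
    proof
      assume "a = 0"
      then have "AE x in M. f x = 0" using Lp_norm_eq_0[OF f] a_def by simp
      then have "AE x in M. f x + g x = g x" by eventually_elim simp
      then have "Lp_norm M p (\<lambda>x. f x + g x) = Lp_norm M p g"
        using fm gm by (intro Lp_norm_cong_AE) auto
      then show ?thesis using \<open>a = 0\<close> a_def by simp
    next
      assume "b = 0"
      then have "AE x in M. g x = 0" using Lp_norm_eq_0[OF g] b_def by simp
      then have "AE x in M. f x + g x = f x" by eventually_elim simp
      then have "Lp_norm M p (\<lambda>x. f x + g x) = Lp_norm M p f"
        using fm gm by (intro Lp_norm_cong_AE) auto
      then show ?thesis using \<open>b = 0\<close> b_def by simp
    qed
  next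
    case False
    then have ap: "0 < a" and bp: "0 < b" using a0 b0 by auto
    define t where "t = a / (a + b)"
    have t0: "0 \<le> t" "t \<le> 1" using ap bp by (auto simp: t_def field_simps)
    have t1: "1 - t = b / (a + b)" using ap bp by (simp add: t_def field_simps)
    have pt: "\<bar>f x + g x\<bar> powr p \<le> (a + b) powr p *
        (t * (\<bar>f x\<bar> powr p / a powr p) + (1 - t) * (\<bar>g x\<bar> powr p / b powr p))" for x
    proof -
      have eq: "\<bar>f x\<bar> + \<bar>g x\<bar> = (a + b) * (t * (\<bar>f x\<bar> / a) + (1 - t) * (\<bar>g x\<bar> / b))"
      proof -
        have "t * (\<bar>f x\<bar> / a) = \<bar>f x\<bar> / (a + b)" using ap bp by (simp add: t_def)
        moreover have "(1 - t) * (\<bar>g x\<bar> / b) = \<bar>g x\<bar> / (a + b)" using ap bp by (simp add: t1)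
        ultimately show ?thesis using ap bp by (simp add: add_divide_distrib[symmetric])
      qed
      have "\<bar>f x + g x\<bar> powr p \<le> (\<bar>f x\<bar> + \<bar>g x\<bar>) powr p"
        using p1 by (intro powr_mono2) auto
      also have "\<dots> = (a + b) powr p * (t * (\<bar>f x\<bar> / a) + (1 - t) * (\<bar>g x\<bar> / b)) powr p"
        unfolding eq by (rule powr_mult)
      also have "\<dots> \<le> (a + b) powr p * (t * (\<bar>f x\<bar> / a) powr p + (1 - t) * (\<bar>g x\<bar> / b) powr p)"
        using ap bp t0 by (intro mult_left_mono powr_convex_ineq p1) auto
      finally show ?thesis by (simp add: powr_divide)
    qed
    have intf: "integrable M (\<lambda>x. \<bar>f x\<bar> powr p)" and intg: "integrable M (\<lambda>x. \<bar>g x\<bar> powr p)"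
      using f g by (simp_all add: Lp_fun_int)
    have "(\<integral>x. \<bar>f x + g x\<bar> powr p \<partial>M) \<le> (\<integral>x. (a + b) powr p *
        (t * (\<bar>f x\<bar> powr p / a powr p) + (1 - t) * (\<bar>g x\<bar> powr p / b powr p)) \<partial>M)"
      using pt intf intg Lp_fun_int[OF Lp_fun_add[OF f g]] by (intro integral_mono) auto
    also have "\<dots> = (a + b) powr p * (t * ((\<integral>x. \<bar>f x\<bar> powr p \<partial>M) / a powr p)
        + (1 - t) * ((\<integral>x. \<bar>g x\<bar> powr p \<partial>M) / b powr p))"
      using intf intg by simp
    also have "(\<integral>x. \<bar>f x\<bar> powr p \<partial>M) = a powr p" using Lp_norm_pow[OF f] a_def by simp
    also have "(\<integral>x. \<bar>g x\<bar> powr p \<partial>M) = b powr p" using Lp_norm_pow[OF g] b_def by simp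
    finally have I: "(\<integral>x. \<bar>f x + g x\<bar> powr p \<partial>M) \<le> (a + b) powr p"
      using ap bp by simp
    have "Lp_norm M p (\<lambda>x. f x + g x) \<le> ((a + b) powr p) powr (1/p)"
      unfolding Lp_norm_def using I p1 by (intro powr_mono2) auto
    also have "\<dots> = a + b" using p_pos ap bp by (simp add: powr_powr)
    finally show ?thesis by (simp add: a_def b_def)
  qed
qed

lemma Lp_norm_diff_triangle:
  assumes f: "f \<in> Lp_fun M p" and g: "g \<in> Lp_fun M p" and h: "h \<in> Lp_fun M p"
  shows "Lp_norm M p (\<lambda>x. f x - h x) \<le> Lp_norm M p (\<lambda>x. f x - g x) + Lp_norm M p (\<lambda>x. g x - h x)"
  using Lp_norm_triangle[OF Lp_fun_diff[OF f g] Lp_fun_diff[OF g h]] by simp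

lemma Lp_norm_diff_commute:
  assumes f: "f \<in> Lp_fun M p" and g: "g \<in> Lp_fun M p"
  shows "Lp_norm M p (\<lambda>x. f x - g x) = Lp_norm M p (\<lambda>x. g x - f x)"
  using Lp_norm_cmult[OF Lp_fun_diff[OF g f], of "-1"] by simp

lemma Lp_class_mem: "f \<in> Lp_fun M p \<Longrightarrow> f \<in> Lp_class M p f"
  by (simp add: Lp_class_def)

lemma Lp_class_eq:
  assumes f: "f \<in> Lp_fun M p" and g: "g \<in> Lp_fun M p"
  shows "Lp_class M p f = Lp_class M p g \<longleftrightarrow> (AE x in M. f x = g x)"
proof
  assume "Lp_class M p f = Lp_class M p g"
  then have "f \<in> Lp_class M p g" using Lp_class_mem[OF f] by simp
  then show "AE x in M. f x = g x" by (simp add: Lp_class_def)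
next
  assume ae: "AE x in M. f x = g x"
  show "Lp_class M p f = Lp_class M p g"
    unfolding Lp_class_def using ae by (auto elim: AE_mp)
qed

lemma Lp_rep:
  assumes F: "F \<in> Lp_space M p"
  shows "(SOME f. f \<in> F) \<in> F" "(SOME f. f \<in> F) \<in> Lp_fun M p"
    "Lp_class M p (SOME f. f \<in> F) = F"
proof -
  obtain f where f: "f \<in> Lp_fun M p" and Ff: "F = Lp_class M p f"
    using F by (auto simp: Lp_space_def)
  have "f \<in> F" using Ff Lp_class_mem[OF f] by simp
  then show r: "(SOME f. f \<in> F) \<in> F" by (rule someI[where P="\<lambda>f. f \<in> F"])
  then show r2: "(SOME f. f \<in> F) \<in> Lp_fun M p" using Ff by (simp add: Lp_class_def)
  have "AE x in M. (SOME f. f \<in> F) x = f x" using r Ff by (simp add: Lp_class_def)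
  then show "Lp_class M p (SOME f. f \<in> F) = F" using Lp_class_eq[OF r2 f] Ff by simp
qed

lemma Lp_class_in: "f \<in> Lp_fun M p \<Longrightarrow> Lp_class M p f \<in> Lp_space M p"
  by (simp add: Lp_space_def)

lemma Lp_rep_class:
  assumes f: "f \<in> Lp_fun M p"
  shows "AE x in M. (SOME g. g \<in> Lp_class M p f) x = f x"
  using Lp_rep(1)[OF Lp_class_in[OF f]] by (simp add: Lp_class_def)

lemma Lp_dist_class:
  assumes f: "f \<in> Lp_fun M p" and g: "g \<in> Lp_fun M p"
  shows "Lp_dist M p (Lp_class M p f) (Lp_class M p g) = Lp_norm M p (\<lambda>x. f x - g x)"
proof -
  have r1: "(SOME h. h \<in> Lp_class M p f) \<in> Lp_fun M p"
    and r2: "(SOME h. h \<in> Lp_class M p g) \<in> Lp_fun M p"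
    using Lp_rep(2)[OF Lp_class_in[OF f]] Lp_rep(2)[OF Lp_class_in[OF g]] by auto
  show ?thesis unfolding Lp_dist_def
    using Lp_rep_class[OF f] Lp_rep_class[OF g] Lp_fun_diff[OF r1 r2] Lp_fun_diff[OF f g]
    by (intro Lp_norm_cong_AE) (auto simp: Lp_fun_meas elim: AE_mp)
qed

lemma Lp_metric: "Metric_space (Lp_space M p) (Lp_dist M p)"
proof
  fix F G :: "('a \<Rightarrow> real) set"
  show "0 \<le> Lp_dist M p F G" by (simp add: Lp_dist_def Lp_norm_nonneg)
  show "Lp_dist M p F G = Lp_dist M p G F"
    unfolding Lp_dist_def Lp_norm_def by (simp add: abs_minus_commute)
next
  fix F G assume F: "F \<in> Lp_space M p" and G: "G \<in> Lp_space M p"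
  note rF = Lp_rep[OF F] and rG = Lp_rep[OF G]
  have "Lp_dist M p F G = 0 \<longleftrightarrow> (AE x in M. (SOME f. f \<in> F) x - (SOME f. f \<in> G) x = 0)"
    unfolding Lp_dist_def by (rule Lp_norm_eq_0[OF Lp_fun_diff[OF rF(2) rG(2)]])
  also have "\<dots> \<longleftrightarrow> (AE x in M. (SOME f. f \<in> F) x = (SOME f. f \<in> G) x)" by simp
  also have "\<dots> \<longleftrightarrow> Lp_class M p (SOME f. f \<in> F) = Lp_class M p (SOME f. f \<in> G)"
    by (rule Lp_class_eq[OF rF(2) rG(2), symmetric])
  also have "\<dots> \<longleftrightarrow> F = G" using rF(3) rG(3) by simp
  finally show "Lp_dist M p F G = 0 \<longleftrightarrow> F = G" .
next
  fix F G H assume F: "F \<in> Lp_space M p" and G: "G \<in> Lp_space M p" and H: "H \<in> Lp_space M p"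
  note rF = Lp_rep[OF F] and rG = Lp_rep[OF G] and rH = Lp_rep[OF H]
  show "Lp_dist M p F H \<le> Lp_dist M p F G + Lp_dist M p G H"
    unfolding Lp_dist_def by (rule Lp_norm_diff_triangle[OF rF(2) rG(2) rH(2)])
qed

end



context Metric_space
begin

lemma lipschitz_cont_real:
  assumes L: "\<And>x y. x \<in> M \<Longrightarrow> y \<in> M \<Longrightarrow> f x \<le> f y + d x y"
  shows "continuous_map mtopology euclideanreal f"
proof -
  have "continuous_map mtopology Met_TC.mtopology f"
    unfolding metric_continuous_map[OF Met_TC.Metric_space_axioms]
  proof (intro conjI ballI allI impI)
    show "f ` M \<subseteq> UNIV" by simp
    fix a and \<epsilon> :: real assume a: "a \<in> M" and e: "0 < \<epsilon>"
    show "\<exists>\<delta>>0. \<forall>x. x \<in> M \<and> d a x < \<delta> \<longrightarrow> dist (f a) (f x) < \<epsilon>"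
    proof (intro exI conjI allI impI)
      show "0 < \<epsilon>" by (rule e)
      fix x assume x: "x \<in> M \<and> d a x < \<epsilon>"
      have "f a \<le> f x + d a x" "f x \<le> f a + d x a" using L a x by auto
      then show "dist (f a) (f x) < \<epsilon>" using x commute[of x a] unfolding dist_real_def abs_less_iff by linarith
    qed
  qed
  then show ?thesis by simp
qed

lemma cover_radius:
  assumes op: "\<And>U. U \<in> \<U> \<Longrightarrow> openin mtopology U" and cov: "\<Union>\<U> = M"
  obtains r where "\<And>x. x \<in> M \<Longrightarrow> 0 < r x"
    "\<And>x y. x \<in> M \<Longrightarrow> y \<in> M \<Longrightarrow> r x \<le> r y + d x y"
    "\<And>x \<rho>. x \<in> M \<Longrightarrow> \<rho> < r x \<Longrightarrow> \<exists>U\<in>\<U>. mball x \<rho> \<subseteq> U"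
proof -
  define S where "S x = {\<rho>. \<rho> \<le> 1 \<and> (\<exists>U\<in>\<U>. mball x \<rho> \<subseteq> U)}" for x
  define r where "r x = Sup (S x)" for x
  have bdd: "bdd_above (S x)" for x unfolding S_def by (auto intro: bdd_aboveI)
  have pos: "\<exists>\<rho>>0. \<rho> \<in> S x" if x: "x \<in> M" for x
  proof -
    obtain U where U: "U \<in> \<U>" "x \<in> U" using cov x by auto
    then obtain \<epsilon> where e: "\<epsilon> > 0" "mball x \<epsilon> \<subseteq> U" using op[OF U(1)] by (auto simp: openin_mtopology)
    have "mball x (min \<epsilon> 1) \<subseteq> U" using e(2) by auto
    then show ?thesis using e U by (intro exI[of _ "min \<epsilon> 1"]) (auto simp: S_def)
  qed
  show ?thesis
  proof
    fix x assume x: "x \<in> M"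
    then obtain \<rho> where "\<rho> > 0" "\<rho> \<in> S x" using pos by blast
    then show "0 < r x" unfolding r_def using cSup_upper[OF _ bdd] by fastforce
  next
    fix x \<rho> assume x: "x \<in> M" and lt: "\<rho> < r x"
    have ne: "S x \<noteq> {}" using pos[OF x] by auto
    obtain \<rho>' where "\<rho>' \<in> S x" "\<rho> < \<rho>'" using less_cSup_iff[OF ne bdd] lt r_def by auto
    then obtain U where "U \<in> \<U>" "mball x \<rho>' \<subseteq> U" by (auto simp: S_def)
    moreover have "mball x \<rho> \<subseteq> mball x \<rho>'" using \<open>\<rho> < \<rho>'\<close> by auto
    ultimately show "\<exists>U\<in>\<U>. mball x \<rho> \<subseteq> U" by blast
  next
    fix x y assume x: "x \<in> M" and y: "y \<in> M"
    have ne: "S x \<noteq> {}" using pos[OF x] by auto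
    have "\<rho> - d x y \<le> r y" if \<rho>: "\<rho> \<in> S x" for \<rho>
    proof -
      obtain U where U: "U \<in> \<U>" "mball x \<rho> \<subseteq> U" "\<rho> \<le> 1" using \<rho> by (auto simp: S_def)
      have "mball y (\<rho> - d x y) \<subseteq> mball x \<rho>"
      proof
        fix z assume "z \<in> mball y (\<rho> - d x y)"
        then have z: "z \<in> M" "d y z < \<rho> - d x y" by auto
        with triangle[OF x y z(1)] show "z \<in> mball x \<rho>" using x by simp
      qed
      moreover have "\<rho> - d x y \<le> 1" using U(3) nonneg[of x y] by linarith
      ultimately have "\<rho> - d x y \<in> S y" using U by (auto simp: S_def)
      then show ?thesis unfolding r_def by (rule cSup_upper[OF _ bdd])
    qed
    then have "Sup (S x) \<le> r y + d x y" using ne by (intro cSup_least) force+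
    then show "r x \<le> r y + d x y" by (simp add: r_def)
  qed
qed

lemma set_distance:
  assumes B: "closedin mtopology B"
  obtains \<beta> where "\<And>x b. b \<in> B \<Longrightarrow> \<beta> x \<le> d x b"
    "\<And>x y. x \<in> M \<Longrightarrow> y \<in> M \<Longrightarrow> \<beta> x \<le> \<beta> y + d x y"
    "\<And>x. x \<in> M \<Longrightarrow> x \<notin> B \<Longrightarrow> 0 < \<beta> x"
proof -
  have BM: "B \<subseteq> M" using closedin_subset[OF B] by simp
  define \<beta> where "\<beta> x = Inf (insert 1 ((\<lambda>b. d x b) ` B))" for x
  have bdd: "bdd_below (insert 1 ((\<lambda>b. d x b) ` B))" for x
    by (rule bdd_belowI[of _ 0]) auto
  have low: "\<beta> x \<le> d x b" if "b \<in> B" for x b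
    unfolding \<beta>_def using that by (intro cInf_lower[OF _ bdd]) auto
  have le1: "\<beta> x \<le> 1" for x unfolding \<beta>_def by (intro cInf_lower[OF _ bdd]) auto
  show ?thesis
  proof
    fix x b assume "b \<in> B" then show "\<beta> x \<le> d x b" by (rule low)
  next
    fix x y assume x: "x \<in> M" and y: "y \<in> M"
    have "\<beta> x - d x y \<le> \<beta> y" unfolding \<beta>_def[of y]
    proof (rule cInf_greatest)
      show "insert 1 ((\<lambda>b. d y b) ` B) \<noteq> {}" by simp
      fix z assume "z \<in> insert 1 ((\<lambda>b. d y b) ` B)"
      then show "\<beta> x - d x y \<le> z"
      proof
        assume "z = 1" then show ?thesis using le1[of x] nonneg[of x y] by linarith
      next
        assume "z \<in> (\<lambda>b. d y b) ` B"
        then obtain b where b: "b \<in> B" "z = d y b" by auto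
        then show ?thesis using low[OF b(1), of x] triangle[OF x y, of b] BM by auto
      qed
    qed
    then show "\<beta> x \<le> \<beta> y + d x y" by simp
  next
    fix x assume x: "x \<in> M" and nB: "x \<notin> B"
    have "openin mtopology (M - B)" using B by (simp add: closedin_def)
    then obtain \<epsilon> where e: "\<epsilon> > 0" "mball x \<epsilon> \<subseteq> M - B"
      using x nB by (auto simp: openin_mtopology)
    have "min \<epsilon> 1 \<le> \<beta> x" unfolding \<beta>_def
    proof (rule cInf_greatest)
      show "insert 1 ((\<lambda>b. d x b) ` B) \<noteq> {}" by simp
      fix z assume "z \<in> insert 1 ((\<lambda>b. d x b) ` B)"
      then show "min \<epsilon> 1 \<le> z"
      proof
        assume "z \<in> (\<lambda>b. d x b) ` B"
        then obtain b where b: "b \<in> B" "z = d x b" by auto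
        have "\<not> d x b < \<epsilon>"
        proof
          assume "d x b < \<epsilon>"
          then have "b \<in> mball x \<epsilon>" using x b BM by auto
          then show False using e b by auto
        qed
        then show ?thesis using b by simp
      qed simp
    qed
    then show "0 < \<beta> x" using e by simp
  qed
qed

end



locale Zctx = Lpl M p for M :: "'a measure" and p :: real +
  fixes d :: "'a \<Rightarrow> 'a \<Rightarrow> real" and a :: 'a and r0 :: real
  assumes ms: "Metric_space (space M) d"
    and aX: "a \<in> X0 M"
    and balls: "\<And>r. r > 0 \<Longrightarrow> mball_of M d a r \<in> sets M \<and> emeasure M (mball_of M d a r) > 0"
    and r0: "r0 > 0"
    and fin: "emeasure M (mball_of M d a r0) < \<infinity>"
begin

lemma a_space: "a \<in> space M" using aX by (simp add: X0_def)

lemma a_null: "{a} \<in> null_sets M" using aX by (simp add: X0_def null_sets_def)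

lemma d_nonneg: "0 \<le> d a x" using Metric_space.nonneg[OF ms] by simp

lemma d_pos: "x \<in> space M \<Longrightarrow> x \<noteq> a \<Longrightarrow> 0 < d a x"
  using Metric_space.mdist_pos_less[OF ms, of a x] a_space by simp

lemma d_meas[measurable]: "(\<lambda>x. d a x) \<in> borel_measurable M"
  unfolding borel_measurable_iff_less
proof
  fix r :: real
  show "{w \<in> space M. d a w < r} \<in> sets M"
  proof (cases "r > 0")
    case True then show ?thesis using balls[OF True] by (simp add: mball_of_def)
  next
    case False
    have "\<not> d a y < r" for y using d_nonneg[of y] False by linarith
    then have e: "{w \<in> space M. d a w < r} = {}" by blast
    show ?thesis unfolding e by simp
  qed
qed

lemma mult_le1: "0 \<le> c \<Longrightarrow> c \<le> 1 \<Longrightarrow> c * \<bar>y\<bar> \<le> \<bar>y::real\<bar>"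
  by (simp add: mult_left_le_one_le)

definition B0 where "B0 = mball_of M d a r0"
definition w where "w s x = max 0 (min 1 (r0 / d a x - s))"
definition q where "q h x = (1 - h x) * indicator B0 x"
definition kk where "kk s h x = h x + w s x * (1 - h x)"
definition E where "E n h = Lp_norm M p (\<lambda>x. q h x * indicator (mball_of M d a (r0 / real (Suc n))) x)"

lemma ball_sets[measurable]: "r > 0 \<Longrightarrow> mball_of M d a r \<in> sets M" using balls by simp

lemma B0_sets[measurable]: "B0 \<in> sets M" using ball_sets[OF r0] by (simp add: B0_def)

lemma w_meas[measurable]: "w s \<in> borel_measurable M"
  unfolding w_def by measurable

lemma ind_B0_Lp: "indicator B0 \<in> Lp_fun M p"
proof (rule Lp_funI)
  show "indicator B0 \<in> borel_measurable M" by measurable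
  have "integrable M (indicator B0 :: 'a \<Rightarrow> real)"
    using fin B0_sets by (simp add: B0_def integrable_real_indicator)
  moreover have "(\<lambda>x. \<bar>indicator B0 x :: real\<bar> powr p) = indicator B0"
    using p_pos by (auto simp: indicator_def)
  ultimately show "integrable M (\<lambda>x. \<bar>indicator B0 x :: real\<bar> powr p)" by simp
qed

lemma q_Lp: assumes h: "h \<in> Lp_fun M p" shows "q h \<in> Lp_fun M p"
proof -
  have "(\<lambda>x. h x * indicator B0 x) \<in> Lp_fun M p"
    using h Lp_fun_meas[OF h] by (intro Lp_fun_bound[OF h]) (auto simp: indicator_def)
  from Lp_fun_diff[OF ind_B0_Lp this] show ?thesis
    by (simp add: q_def[abs_def] algebra_simps)
qed

lemma w_bounds: "0 \<le> w s x" "w s x \<le> 1" by (auto simp: w_def)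

lemma w_pos: assumes "w s x \<noteq> 0" and s1: "1 \<le> s" shows "0 < d a x" "d a x < r0 / s"
proof -
  have gt: "r0 / d a x > s" using assms by (auto simp: w_def)
  then have "d a x \<noteq> 0" using s1 by auto
  then show dp: "0 < d a x" using d_nonneg[of x] by simp
  from gt dp have "s * d a x < r0" by (simp add: pos_less_divide_eq)
  then show "d a x < r0 / s" using s1 by (simp add: pos_less_divide_eq mult.commute)
qed

lemma w_lip: "\<bar>w s x - w t x\<bar> \<le> \<bar>s - t\<bar>"
  unfolding w_def by (simp add: abs_le_iff) linarith

lemma w_zero_out: assumes "1 \<le> s" "x \<in> space M" "x \<notin> B0" shows "w s x = 0"
proof (rule ccontr)
  assume "w s x \<noteq> 0"
  from w_pos[OF this assms(1)] have lt: "d a x < r0 / s" by simp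
  have "r0 / s \<le> r0" using assms(1) r0 by (simp add: divide_le_eq)
  with lt have "d a x < r0" by linarith
  then show False using assms by (simp add: B0_def mball_of_def)
qed

lemma w_one: assumes "0 \<le> s" "x \<in> space M" "x \<noteq> a" "d a x < r0 / (s + 1)" shows "w s x = 1"
proof -
  have dp: "0 < d a x" using d_pos assms by simp
  then have "(s + 1) * d a x < r0" using assms(4) assms(1) by (simp add: pos_less_divide_eq mult.commute)
  then have "s + 1 < r0 / d a x" using dp by (simp add: pos_less_divide_eq)
  then show ?thesis by (simp add: w_def)
qed

lemma kk_Lp: assumes h: "h \<in> Lp_fun M p" and s1: "1 \<le> s" shows "kk s h \<in> Lp_fun M p"
proof -
  have "(\<lambda>x. w s x * (1 - h x)) \<in> Lp_fun M p"
  proof (rule Lp_fun_bound[OF q_Lp[OF h]])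
    show "(\<lambda>x. w s x * (1 - h x)) \<in> borel_measurable M" using Lp_fun_meas[OF h] by measurable
    fix x assume x: "x \<in> space M"
    show "\<bar>w s x * (1 - h x)\<bar> \<le> \<bar>q h x\<bar>"
    proof (cases "x \<in> B0")
      case True then show ?thesis using w_bounds[of s x] by (simp add: q_def abs_mult mult_le1)
    next
      case False then show ?thesis using w_zero_out[OF s1 x False] by (simp add: q_def)
    qed
  qed
  from Lp_fun_add[OF h this] show ?thesis by (simp add: kk_def[abs_def])
qed

abbreviation "Bn n \<equiv> mball_of M d a (r0 / real (Suc n))"

lemma Bn_sets[measurable]: "Bn n \<in> sets M" using r0 by (intro ball_sets) simp

lemma E_fun_Lp: assumes h: "h \<in> Lp_fun M p"
  shows "(\<lambda>x. q h x * indicator (Bn n) x) \<in> Lp_fun M p"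
proof (rule Lp_fun_bound[OF q_Lp[OF h]])
  show "(\<lambda>x. q h x * indicator (Bn n) x) \<in> borel_measurable M"
    using Lp_fun_meas[OF q_Lp[OF h]] by measurable
qed (auto simp: indicator_def)

lemma kk_near: assumes h: "h \<in> Lp_fun M p" and s1: "1 \<le> s" and sn: "real (Suc n) \<le> s"
  shows "Lp_norm M p (\<lambda>x. kk s h x - h x) \<le> E n h"
  unfolding E_def
proof (rule Lp_norm_mono[OF E_fun_Lp[OF h]])
  show "(\<lambda>x. kk s h x - h x) \<in> borel_measurable M"
    using Lp_fun_meas[OF kk_Lp[OF h s1]] Lp_fun_meas[OF h] by measurable
  fix x assume x: "x \<in> space M"
  show "\<bar>kk s h x - h x\<bar> \<le> \<bar>q h x * indicator (Bn n) x\<bar>"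
  proof (cases "w s x = 0")
    case True then show ?thesis by (simp add: kk_def)
  next
    case False
    have inB0: "x \<in> B0" using w_zero_out[OF s1 x] False by blast
    have "d a x < r0 / s" using w_pos[OF False s1] by simp
    also have "r0 / s \<le> r0 / real (Suc n)" using sn r0 by (intro divide_left_mono) auto
    finally have "x \<in> Bn n" using x by (simp add: mball_of_def)
    then show ?thesis using inB0 w_bounds[of s x]
      by (simp add: kk_def q_def abs_mult mult_le1)
  qed
qed

lemma kk_cont: assumes h: "h \<in> Lp_fun M p" and h': "h' \<in> Lp_fun M p" and s1: "1 \<le> s" and t1: "1 \<le> t"
  shows "Lp_norm M p (\<lambda>x. kk s h x - kk t h' x) \<le> Lp_norm M p (\<lambda>x. h x - h' x) + \<bar>s - t\<bar> * Lp_norm M p (q h')"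
proof -
  define u where "u x = (1 - w s x) * (h x - h' x)" for x
  define v where "v x = (w s x - w t x) * (1 - h' x)" for x
  have eq: "(\<lambda>x. kk s h x - kk t h' x) = (\<lambda>x. u x + v x)"
    by (auto simp: kk_def u_def v_def algebra_simps)
  have hm: "h \<in> borel_measurable M" "h' \<in> borel_measurable M" using h h' by (auto simp: Lp_fun_meas)
  have uL: "u \<in> Lp_fun M p"
  proof (rule Lp_fun_bound[OF Lp_fun_diff[OF h h']])
    show "u \<in> borel_measurable M" unfolding u_def[abs_def] using hm by measurable
    fix x show "\<bar>u x\<bar> \<le> \<bar>h x - h' x\<bar>" using w_bounds[of s x]
      by (simp add: u_def abs_mult mult_le1)
  qed
  have vb: "\<bar>v x\<bar> \<le> \<bar>\<bar>s - t\<bar> * q h' x\<bar>" if x: "x \<in> space M" for x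
  proof (cases "x \<in> B0")
    case True
    then show ?thesis using w_lip[of s x t]
      by (simp add: v_def q_def abs_mult mult_right_mono)
  next
    case False then show ?thesis using w_zero_out[OF s1 x False] w_zero_out[OF t1 x False]
      by (simp add: v_def)
  qed
  have vm: "v \<in> borel_measurable M" unfolding v_def[abs_def] using hm by measurable
  have vL: "v \<in> Lp_fun M p" by (rule Lp_fun_bound[OF Lp_fun_cmult[OF q_Lp[OF h']] vm vb])
  have "Lp_norm M p (\<lambda>x. kk s h x - kk t h' x) \<le> Lp_norm M p u + Lp_norm M p v"
    unfolding eq by (rule Lp_norm_triangle[OF uL vL])
  also have "Lp_norm M p u \<le> Lp_norm M p (\<lambda>x. h x - h' x)"
  proof (rule Lp_norm_mono[OF Lp_fun_diff[OF h h']])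
    show "u \<in> borel_measurable M" using uL by (simp add: Lp_fun_meas)
    fix x show "\<bar>u x\<bar> \<le> \<bar>h x - h' x\<bar>" using w_bounds[of s x]
      by (simp add: u_def abs_mult mult_le1)
  qed
  also have "Lp_norm M p v \<le> Lp_norm M p (\<lambda>x. \<bar>s - t\<bar> * q h' x)"
    by (rule Lp_norm_mono[OF Lp_fun_cmult[OF q_Lp[OF h']] vm vb])
  also have "\<dots> = \<bar>s - t\<bar> * Lp_norm M p (q h')"
    using Lp_norm_cmult[OF q_Lp[OF h']] by simp
  finally show ?thesis by simp
qed

lemma E_nonneg: "0 \<le> E n h" by (simp add: E_def Lp_norm_nonneg)

lemma E_mono: assumes h: "h \<in> Lp_fun M p" and nm: "n \<le> m" shows "E m h \<le> E n h"
  unfolding E_def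
proof (rule Lp_norm_mono[OF E_fun_Lp[OF h]])
  show "(\<lambda>x. q h x * indicator (Bn m) x) \<in> borel_measurable M"
    using Lp_fun_meas[OF q_Lp[OF h]] by measurable
  have sub: "Bn m \<subseteq> Bn n"
  proof
    fix x assume "x \<in> Bn m"
    moreover have "r0 / real (Suc m) \<le> r0 / real (Suc n)" using nm r0 by (intro divide_left_mono) auto
    ultimately show "x \<in> Bn n" by (auto simp: mball_of_def)
  qed
  fix x show "\<bar>q h x * indicator (Bn m) x\<bar> \<le> \<bar>q h x * indicator (Bn n) x\<bar>"
    using sub by (auto simp: indicator_def)
qed

lemma E_lip: assumes h: "h \<in> Lp_fun M p" and h': "h' \<in> Lp_fun M p"
  shows "E n h \<le> E n h' + Lp_norm M p (\<lambda>x. h x - h' x)"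
proof -
  define v where "v x = (h' x - h x) * indicator B0 x * indicator (Bn n) x" for x
  have hm: "h \<in> borel_measurable M" "h' \<in> borel_measurable M" using h h' by (auto simp: Lp_fun_meas)
  have vm: "v \<in> borel_measurable M" unfolding v_def[abs_def] using hm by measurable
  have vb: "\<bar>v x\<bar> \<le> \<bar>h x - h' x\<bar>" for x by (auto simp: v_def indicator_def abs_minus_commute)
  have vL: "v \<in> Lp_fun M p" by (rule Lp_fun_bound[OF Lp_fun_diff[OF h h'] vm vb])
  have eq: "(\<lambda>x. q h x * indicator (Bn n) x) = (\<lambda>x. q h' x * indicator (Bn n) x + v x)"
    by (auto simp: q_def v_def algebra_simps)
  have "E n h \<le> E n h' + Lp_norm M p v"
    unfolding E_def eq by (rule Lp_norm_triangle[OF E_fun_Lp[OF h'] vL])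
  also have "Lp_norm M p v \<le> Lp_norm M p (\<lambda>x. h x - h' x)"
    by (rule Lp_norm_mono[OF Lp_fun_diff[OF h h'] vm vb])
  finally show ?thesis by simp
qed

lemma E_small: assumes h: "h \<in> Lp_fun M p" and e: "0 < \<epsilon>" shows "\<exists>n. E n h < \<epsilon>"
proof -
  define sq where "sq n x = \<bar>q h x * indicator (Bn n) x\<bar> powr p" for n x
  have qm: "q h \<in> borel_measurable M" using q_Lp[OF h] by (simp add: Lp_fun_meas)
  have lim: "(\<lambda>n. integral\<^sup>L M (sq n)) \<longlonglongrightarrow> integral\<^sup>L M (\<lambda>x. 0::real)"
  proof (rule integral_dominated_convergence[where w="\<lambda>x. \<bar>q h x\<bar> powr p"])
    show "(\<lambda>x. 0::real) \<in> borel_measurable M" by simp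
    show "sq n \<in> borel_measurable M" for n unfolding sq_def[abs_def] using qm by measurable
    show "integrable M (\<lambda>x. \<bar>q h x\<bar> powr p)" using q_Lp[OF h] by (simp add: Lp_fun_int)
    show "AE x in M. norm (sq n x) \<le> \<bar>q h x\<bar> powr p" for n
      using p1 by (intro AE_I2) (auto simp: sq_def indicator_def intro!: powr_mono2)
    show "AE x in M. (\<lambda>n. sq n x) \<longlonglongrightarrow> 0"
      using AE_not_in[OF a_null]
    proof (rule AE_mp[OF _ AE_I2], intro impI)
      fix x assume x: "x \<in> space M" and xa: "x \<notin> {a}"
      have dp: "0 < d a x" using d_pos x xa by simp
      obtain N where N: "r0 / d a x < real N" using reals_Archimedean2 by blast
      have ev: "sq n x = 0" if "N \<le> n" for n
      proof -
        have "r0 < real N * d a x" using N dp by (simp add: pos_divide_less_eq)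
        also have "\<dots> \<le> real (Suc n) * d a x" using that dp by (intro mult_right_mono) auto
        finally have "r0 / real (Suc n) < d a x" by (simp add: divide_less_eq mult.commute)
        then have "x \<notin> Bn n" by (simp add: mball_of_def)
        then show ?thesis by (simp add: sq_def)
      qed
      show "(\<lambda>n. sq n x) \<longlonglongrightarrow> 0"
        by (rule tendsto_eventually) (use ev in \<open>auto simp: eventually_sequentially\<close>)
    qed
  qed
  have "0 < \<epsilon> powr p" using e by simp
  from order_tendstoD(2)[OF lim[simplified] this] obtain n where n: "integral\<^sup>L M (sq n) < \<epsilon> powr p"
    by (auto simp: eventually_sequentially)
  have "E n h = (integral\<^sup>L M (sq n)) powr (1/p)" by (simp add: E_def Lp_norm_def sq_def[abs_def])
  also have "\<dots> < (\<epsilon> powr p) powr (1/p)"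
    using n p_pos by (intro powr_less_mono2) (auto simp: sq_def)
  also have "\<dots> = \<epsilon>" using p_pos e by (simp add: powr_powr)
  finally show ?thesis by blast
qed

lemma ball_not_AE: assumes "0 < \<rho>" shows "\<not> (AE x in M. x \<notin> mball_of M d a \<rho>)"
proof
  assume "AE x in M. x \<notin> mball_of M d a \<rho>"
  then have "mball_of M d a \<rho> \<in> null_sets M" using ball_sets[OF assms] by (simp add: AE_iff_null_sets)
  then show False using balls[OF assms] by (simp add: null_sets_def)
qed

end



context Zctx
begin

lemma Z_main:
  fixes A B :: "('a \<Rightarrow> real) set set" and \<xi> :: "('a \<Rightarrow> real) set \<Rightarrow> real"
  assumes AL: "A \<subseteq> Lp_space M p"
    and xi_pos: "\<And>F. F \<in> A \<Longrightarrow> \<xi> F > 0"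
    and xi_van: "\<And>F f. F \<in> A \<Longrightarrow> f \<in> F \<Longrightarrow> AE x in M. x \<in> mball_of M d a (\<xi> F) \<longrightarrow> f x = 0"
    and ZB: "Z_set (Lp_topology M p) B"
    and cl: "closedin (Lp_topology M p) (A \<union> B)"
  shows "Z_set (Lp_topology M p) (A \<union> B)"
proof -
  interpret L: Metric_space "Lp_space M p" "Lp_dist M p" by (rule Lp_metric)
  have T: "Lp_topology M p = L.mtopology" by (simp add: Lp_topology_def)
  have Bcl: "closedin L.mtopology B" using ZB T by (simp add: Z_set_def)
  obtain \<beta> where \<beta>1: "\<And>x b. b \<in> B \<Longrightarrow> \<beta> x \<le> Lp_dist M p x b"
    and \<beta>2: "\<And>x y. x \<in> Lp_space M p \<Longrightarrow> y \<in> Lp_space M p \<Longrightarrow> \<beta> x \<le> \<beta> y + Lp_dist M p x y"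
    and \<beta>3: "\<And>x. x \<in> Lp_space M p \<Longrightarrow> x \<notin> B \<Longrightarrow> 0 < \<beta> x"
    using L.set_distance[OF Bcl] by blast
  have \<beta>c: "continuous_map L.mtopology euclideanreal \<beta>" by (rule L.lipschitz_cont_real[OF \<beta>2])
  have realc: "\<exists>\<eta>>0. \<forall>F. F \<in> Lp_space M p \<and> Lp_dist M p F0 F < \<eta> \<longrightarrow> \<bar>f F0 - f F\<bar> < \<epsilon>"
    if "continuous_map L.mtopology euclideanreal f" "F0 \<in> Lp_space M p" "0 < \<epsilon>" for f F0 \<epsilon>
  proof -
    have "continuous_map L.mtopology Met_TC.mtopology f" using that(1) by simp
    then show ?thesis unfolding L.metric_continuous_map[OF Met_TC.Metric_space_axioms]
      using that(2,3) by (auto simp: dist_real_def)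
  qed
  show ?thesis
    unfolding Z_set_def
  proof (intro conjI allI impI)
    show "closedin (Lp_topology M p) (A \<union> B)" by (rule cl)
    fix \<U> assume "(\<forall>U\<in>\<U>. openin (Lp_topology M p) U) \<and> \<Union>\<U> = topspace (Lp_topology M p)"
    then have op: "\<And>U. U \<in> \<U> \<Longrightarrow> openin L.mtopology U" and cov: "\<Union>\<U> = Lp_space M p"
      by (auto simp: T)
    obtain r where r1: "\<And>x. x \<in> Lp_space M p \<Longrightarrow> 0 < r x"
      and r2: "\<And>x y. x \<in> Lp_space M p \<Longrightarrow> y \<in> Lp_space M p \<Longrightarrow> r x \<le> r y + Lp_dist M p x y"
      and r3: "\<And>x \<rho>. x \<in> Lp_space M p \<Longrightarrow> \<rho> < r x \<Longrightarrow> \<exists>U\<in>\<U>. L.mball x \<rho> \<subseteq> U"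
      using L.cover_radius[OF op cov] by blast
    have rc: "continuous_map L.mtopology euclideanreal r" by (rule L.lipschitz_cont_real[OF r2])
    define \<V> where "\<V> = (\<lambda>F. L.mball F (r F / 4)) ` Lp_space M p"
    have "(\<forall>V\<in>\<V>. openin (Lp_topology M p) V) \<and> \<Union>\<V> = topspace (Lp_topology M p)"
    proof (intro conjI ballI)
      show "openin (Lp_topology M p) V" if "V \<in> \<V>" for V using that by (auto simp: \<V>_def T)
      show "\<Union>\<V> = topspace (Lp_topology M p)"
      proof
        show "\<Union>\<V> \<subseteq> topspace (Lp_topology M p)" by (auto simp: \<V>_def T)
        show "topspace (Lp_topology M p) \<subseteq> \<Union>\<V>"
        proof
          fix F assume "F \<in> topspace (Lp_topology M p)"
          then have F: "F \<in> Lp_space M p" by (simp add: T)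
          then have "F \<in> L.mball F (r F / 4)" using r1[OF F] by simp
          moreover have "L.mball F (r F / 4) \<in> \<V>" using F by (simp add: \<V>_def)
          ultimately show "F \<in> \<Union>\<V>" by blast
        qed
      qed
    qed
    from ZB[unfolded Z_set_def, THEN conjunct2, rule_format, OF this]
    obtain g where gc: "continuous_map (Lp_topology M p) (Lp_topology M p) g"
      and gclose: "\<forall>z\<in>topspace (Lp_topology M p). \<exists>V\<in>\<V>. g z \<in> V \<and> z \<in> V"
      and gB: "g ` topspace (Lp_topology M p) \<inter> B = {}"
      by blast
    have gc': "continuous_map L.mtopology L.mtopology g" using gc by (simp add: T)
    have gS: "g F \<in> Lp_space M p" if "F \<in> Lp_space M p" for F
      using continuous_map_image_subset_topspace[OF gc'] that by auto
    have gnB: "g F \<notin> B" if "F \<in> Lp_space M p" for F using gB that by (auto simp: T)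
    have gnear: "Lp_dist M p F (g F) < 2/3 * r F" if F: "F \<in> Lp_space M p" for F
    proof -
      obtain G where G: "G \<in> Lp_space M p" "g F \<in> L.mball G (r G / 4)" "F \<in> L.mball G (r G / 4)"
        using gclose F by (auto simp: T \<V>_def)
      have d1: "Lp_dist M p G F < r G / 4" and d2: "Lp_dist M p G (g F) < r G / 4" using G by auto
      have "r G \<le> r F + Lp_dist M p G F" using r2[OF G(1) F] .
      have "Lp_dist M p F (g F) \<le> Lp_dist M p F G + Lp_dist M p G (g F)"
        using L.triangle[OF F G(1) gS[OF F]] .
      moreover have "Lp_dist M p F G = Lp_dist M p G F" by (rule L.commute)
      ultimately show ?thesis using d1 d2 \<open>r G \<le> r F + Lp_dist M p G F\<close> by linarith
    qed
    define h where "h F = (SOME f. f \<in> g F)" for F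
    have hL: "h F \<in> Lp_fun M p" if "F \<in> Lp_space M p" for F
      using Lp_rep(2)[OF gS[OF that]] by (simp add: h_def)
    have hcl: "Lp_class M p (h F) = g F" if "F \<in> Lp_space M p" for F
      using Lp_rep(3)[OF gS[OF that]] by (simp add: h_def)
    have hdist: "Lp_dist M p (g F) (g G) = Lp_norm M p (\<lambda>x. h F x - h G x)" for F G
      by (simp add: Lp_dist_def h_def)
    define \<delta> where "\<delta> F = min (r F / 4) (\<beta> (g F) / 2)" for F
    have \<delta>pos: "0 < \<delta> F" if "F \<in> Lp_space M p" for F
      using r1[OF that] \<beta>3[OF gS[OF that] gnB[OF that]] by (simp add: \<delta>_def)
    have \<beta>gc: "continuous_map L.mtopology euclideanreal (\<lambda>F. \<beta> (g F))"
      using continuous_map_compose[OF gc' \<beta>c] by (simp add: o_def)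
    have \<delta>c: "continuous_map L.mtopology euclideanreal \<delta>"
      unfolding \<delta>_def[abs_def]
      by (intro continuous_map_real_min continuous_map_real_divide rc \<beta>gc continuous_map_canonical_const) auto
    define e where "e n F = E n (h F)" for n F
    have ec: "continuous_map L.mtopology euclideanreal (e n)" for n
    proof -
      have "continuous_map L.mtopology euclideanreal (\<lambda>G. E n (SOME f. f \<in> G))"
      proof (rule L.lipschitz_cont_real)
        fix F G assume F: "F \<in> Lp_space M p" and G: "G \<in> Lp_space M p"
        show "E n (SOME f. f \<in> F) \<le> E n (SOME f. f \<in> G) + Lp_dist M p F G"
          unfolding Lp_dist_def by (rule E_lip[OF Lp_rep(2)[OF F] Lp_rep(2)[OF G]])
      qed
      from continuous_map_compose[OF gc' this] show ?thesis by (simp add: o_def e_def[abs_def] h_def)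
    qed
    have \<delta>nz: "\<delta> F \<noteq> 0" if "F \<in> topspace L.mtopology" for F
      using \<delta>pos[of F] that by force
    define tm where "tm n F = max 0 (min 1 (4 * e n F / \<delta> F - 1))" for n F
    have tmc: "continuous_map L.mtopology euclideanreal (tm n)" for n
      unfolding tm_def[abs_def] using \<delta>nz
      by (intro continuous_map_real_min continuous_map_real_max continuous_map_real_divide
          continuous_map_diff continuous_map_real_mult_left ec \<delta>c continuous_map_canonical_const) auto
    have tm_nonneg: "0 \<le> tm n F" for n F by (simp add: tm_def)
    have tm_zero: "tm n F = 0" if F: "F \<in> Lp_space M p" and em: "e m F \<le> \<delta> F / 4" and mn: "m \<le> n" for m n F
    proof -
      have "e n F \<le> e m F" unfolding e_def by (rule E_mono[OF hL[OF F] mn])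
      then have "4 * e n F / \<delta> F \<le> 1" using em \<delta>pos[OF F] by (simp add: divide_le_eq)
      then show ?thesis by (simp add: tm_def)
    qed
    have tm_one: "tm n F = 1" if F: "F \<in> Lp_space M p" and en: "\<delta> F / 2 \<le> e n F" for n F
    proof -
      have "2 \<le> 4 * e n F / \<delta> F" using en \<delta>pos[OF F] by (simp add: le_divide_eq)
      then show ?thesis by (simp add: tm_def)
    qed
    have locfin: "\<exists>n0 \<eta>. \<eta> > 0 \<and> (\<forall>F\<in>Lp_space M p. Lp_dist M p F0 F < \<eta> \<longrightarrow> (\<forall>n\<ge>n0. tm n F = 0))"
      if F0: "F0 \<in> Lp_space M p" for F0
    proof -
      define \<delta>0 where "\<delta>0 = \<delta> F0"
      have d0: "0 < \<delta>0" using \<delta>pos[OF F0] by (simp add: \<delta>0_def)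
      obtain n0 where n0: "e n0 F0 < \<delta>0 / 16"
        using E_small[OF hL[OF F0], of "\<delta>0/16"] d0 by (auto simp: e_def)
      obtain \<eta>1 where \<eta>1: "\<eta>1 > 0" "\<And>F. F \<in> Lp_space M p \<and> Lp_dist M p F0 F < \<eta>1 \<Longrightarrow> \<bar>\<delta> F0 - \<delta> F\<bar> < \<delta>0 / 2"
        using realc[OF \<delta>c F0, of "\<delta>0/2"] d0 by auto
      obtain \<eta>2 where \<eta>2: "\<eta>2 > 0" "\<And>F. F \<in> Lp_space M p \<and> Lp_dist M p F0 F < \<eta>2 \<Longrightarrow> Lp_dist M p (g F0) (g F) < \<delta>0 / 16"
        using gc'[unfolded L.metric_continuous_map[OF Lp_metric]] F0 d0 by (metis divide_pos_pos zero_less_numeral)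
      show ?thesis
      proof (intro exI conjI ballI impI allI)
        show "0 < min \<eta>1 \<eta>2" using \<eta>1 \<eta>2 by simp
        fix F n assume F: "F \<in> Lp_space M p" and dF: "Lp_dist M p F0 F < min \<eta>1 \<eta>2" and nn: "n0 \<le> n"
        have "\<bar>\<delta> F0 - \<delta> F\<bar> < \<delta>0 / 2" using \<eta>1(2)[of F] F dF by simp
        then have dF2: "\<delta>0 / 2 < \<delta> F" unfolding \<delta>0_def abs_less_iff by linarith
        have gd: "Lp_dist M p (g F0) (g F) < \<delta>0 / 16" using \<eta>2(2)[of F] F dF by simp
        have "e n0 F \<le> e n0 F0 + Lp_dist M p (g F) (g F0)"
          unfolding e_def hdist by (rule E_lip[OF hL[OF F] hL[OF F0]])
        also have "Lp_dist M p (g F) (g F0) = Lp_dist M p (g F0) (g F)" by (rule L.commute)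
        finally have "e n0 F \<le> \<delta> F / 4" using n0 gd dF2 by linarith
        then show "tm n F = 0" by (rule tm_zero[OF F _ nn])
      qed
    qed
    define S where "S F = 1 + (\<Sum>n. tm n F)" for F
    have Sfin: "S F = 1 + (\<Sum>n<n0. tm n F)" if "\<forall>n\<ge>n0. tm n F = 0" for F n0
    proof -
      have "(\<Sum>n. tm n F) = (\<Sum>n\<in>{..<n0}. tm n F)"
        by (rule suminf_finite) (use that in auto)
      then show ?thesis by (simp add: S_def)
    qed
    have Sc: "continuous_map L.mtopology euclideanreal S"
      unfolding continuous_map_atin
    proof
      fix F0 assume "F0 \<in> topspace L.mtopology"
      then have F0: "F0 \<in> Lp_space M p" by simp
      obtain n0 \<eta> where \<eta>: "\<eta> > 0" and z: "\<And>F. F\<in>Lp_space M p \<Longrightarrow> Lp_dist M p F0 F < \<eta> \<Longrightarrow> \<forall>n\<ge>n0. tm n F = 0"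
        using locfin[OF F0] by blast
      define fs where "fs F = 1 + (\<Sum>n<n0. tm n F)" for F
      have fsc: "continuous_map L.mtopology euclideanreal fs"
        unfolding fs_def[abs_def] by (intro continuous_map_add continuous_map_sum tmc continuous_map_canonical_const) auto
      have "fs F0 = S F0" using Sfin z[OF F0] F0 \<eta> by (simp add: fs_def)
      then have lim: "limitin euclideanreal fs (S F0) (atin L.mtopology F0)"
        using limitin_continuous_map[OF fsc] F0 by simp
      have "eventually (\<lambda>F. fs F = S F) (atin L.mtopology F0)"
        unfolding eventually_atin
      proof (intro disjI2 exI conjI ballI)
        show "openin L.mtopology (L.mball F0 \<eta>)" by simp
        show "F0 \<in> L.mball F0 \<eta>" using F0 \<eta> by simp
        fix F assume "F \<in> L.mball F0 \<eta> - {F0}"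
        then have "F \<in> Lp_space M p" "Lp_dist M p F0 F < \<eta>" by auto
        then show "fs F = S F" using Sfin[OF z] by (simp add: fs_def)
      qed
      from limitin_transform_eventually[OF this lim]
      show "limitin euclideanreal S (S F0) (atin L.mtopology F0)" .
    qed
    have Sge: "\<exists>n. 1 \<le> S F \<and> real (Suc n) \<le> S F \<and> e n F < \<delta> F / 2" if F: "F \<in> Lp_space M p" for F
    proof -
      obtain m \<eta> where "\<eta> > 0" and z: "\<And>G. G\<in>Lp_space M p \<Longrightarrow> Lp_dist M p F G < \<eta> \<Longrightarrow> \<forall>n\<ge>m. tm n G = 0"
        using locfin[OF F] by blast
      then have zF: "\<forall>n\<ge>m. tm n F = 0" using F by simp
      have summ: "summable (\<lambda>n. tm n F)"
        by (rule summable_finite[of "{..<m}"]) (use zF in auto)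
      obtain k where k: "e k F < \<delta> F / 2"
        using E_small[OF hL[OF F], of "\<delta> F / 2"] \<delta>pos[OF F] by (auto simp: e_def)
      define n0 where "n0 = (LEAST n. e n F < \<delta> F / 2)"
      have en0: "e n0 F < \<delta> F / 2" unfolding n0_def by (rule LeastI[of _ k]) (rule k)
      have small: "\<delta> F / 2 \<le> e i F" if "i < n0" for i
        using not_less_Least[OF that[unfolded n0_def]] by simp
      have s1: "(\<Sum>i<n0. tm i F) = real n0" using tm_one[OF F small] by simp
      have s2: "(\<Sum>i<n0. tm i F) \<le> (\<Sum>n. tm n F)"
        by (rule sum_le_suminf[OF summ]) (auto simp: tm_nonneg)
      from s1 s2 have "real n0 \<le> (\<Sum>n. tm n F)" by simp
      then show ?thesis using en0 by (intro exI[of _ n0]) (simp add: S_def)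
    qed
    define \<Phi> where "\<Phi> F = Lp_class M p (kk (S F) (h F))" for F
    have S1: "1 \<le> S F" if "F \<in> Lp_space M p" for F using Sge[OF that] by blast
    have kL: "kk (S F) (h F) \<in> Lp_fun M p" if F: "F \<in> Lp_space M p" for F
      by (rule kk_Lp[OF hL[OF F] S1[OF F]])
    have \<Phi>S: "\<Phi> F \<in> Lp_space M p" if F: "F \<in> Lp_space M p" for F
      using Lp_class_in[OF kL[OF F]] by (simp add: \<Phi>_def)
    have \<Phi>g: "Lp_dist M p (g F) (\<Phi> F) < \<delta> F" if F: "F \<in> Lp_space M p" for F
    proof -
      obtain n where n: "1 \<le> S F" "real (Suc n) \<le> S F" "e n F < \<delta> F / 2" using Sge[OF F] by blast
      have "Lp_dist M p (\<Phi> F) (g F) = Lp_norm M p (\<lambda>x. kk (S F) (h F) x - h F x)"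
        using Lp_dist_class[OF kL[OF F] hL[OF F]] hcl[OF F] by (simp add: \<Phi>_def)
      also have "\<dots> \<le> E n (h F)" by (rule kk_near[OF hL[OF F] n(1) n(2)])
      finally have "Lp_dist M p (\<Phi> F) (g F) < \<delta> F" using n(3) \<delta>pos[OF F] by (simp add: e_def)
      then show ?thesis using L.commute by metis
    qed
    show "\<exists>f. continuous_map (Lp_topology M p) (Lp_topology M p) f \<and>
             (\<forall>z\<in>topspace (Lp_topology M p). \<exists>U\<in>\<U>. f z \<in> U \<and> z \<in> U) \<and>
             f ` topspace (Lp_topology M p) \<inter> (A \<union> B) = {}"
    proof (intro exI conjI)
      show "continuous_map (Lp_topology M p) (Lp_topology M p) \<Phi>"
        unfolding T L.metric_continuous_map[OF Lp_metric]
      proof (intro conjI ballI allI impI)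
        show "\<Phi> ` Lp_space M p \<subseteq> Lp_space M p" using \<Phi>S by auto
        fix F0 and \<epsilon> :: real assume F0: "F0 \<in> Lp_space M p" and e: "0 < \<epsilon>"
        define C where "C = Lp_norm M p (q (h F0))"
        have C0: "0 \<le> C" by (simp add: C_def Lp_norm_nonneg)
        have e2: "0 < \<epsilon> / 2" using e by simp
        obtain \<eta>1 where \<eta>1: "\<eta>1 > 0" "\<And>F. F \<in> Lp_space M p \<and> Lp_dist M p F0 F < \<eta>1 \<Longrightarrow> Lp_dist M p (g F0) (g F) < \<epsilon> / 2"
          using gc'[unfolded L.metric_continuous_map[OF Lp_metric]] F0 e2 by metis
        have e3: "0 < \<epsilon> / (2 * (C + 1))" using e C0 by simp
        obtain \<eta>2 where \<eta>2: "\<eta>2 > 0" "\<And>F. F \<in> Lp_space M p \<and> Lp_dist M p F0 F < \<eta>2 \<Longrightarrow> \<bar>S F0 - S F\<bar> < \<epsilon> / (2 * (C + 1))"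
          using realc[OF Sc F0 e3] by blast
        show "\<exists>\<delta>>0. \<forall>F. F \<in> Lp_space M p \<and> Lp_dist M p F0 F < \<delta> \<longrightarrow> Lp_dist M p (\<Phi> F0) (\<Phi> F) < \<epsilon>"
        proof (intro exI conjI allI impI)
          show "0 < min \<eta>1 \<eta>2" using \<eta>1 \<eta>2 by simp
          fix F assume "F \<in> Lp_space M p \<and> Lp_dist M p F0 F < min \<eta>1 \<eta>2"
          then have F: "F \<in> Lp_space M p" and dF: "Lp_dist M p F0 F < \<eta>1" "Lp_dist M p F0 F < \<eta>2" by auto
          have "Lp_dist M p (\<Phi> F0) (\<Phi> F) = Lp_dist M p (\<Phi> F) (\<Phi> F0)" by (rule L.commute)
          also have "\<dots> = Lp_norm M p (\<lambda>x. kk (S F) (h F) x - kk (S F0) (h F0) x)"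
            unfolding \<Phi>_def by (rule Lp_dist_class[OF kL[OF F] kL[OF F0]])
          also have "\<dots> \<le> Lp_norm M p (\<lambda>x. h F x - h F0 x) + \<bar>S F - S F0\<bar> * C"
            unfolding C_def by (rule kk_cont[OF hL[OF F] hL[OF F0] S1[OF F] S1[OF F0]])
          also have "Lp_norm M p (\<lambda>x. h F x - h F0 x) = Lp_dist M p (g F0) (g F)"
            using hdist[of F F0] L.commute by metis
          finally have le: "Lp_dist M p (\<Phi> F0) (\<Phi> F) \<le> Lp_dist M p (g F0) (g F) + \<bar>S F - S F0\<bar> * C" .
          have a1: "Lp_dist M p (g F0) (g F) < \<epsilon> / 2" using \<eta>1(2)[of F] F dF by auto
          have a2: "\<bar>S F - S F0\<bar> * C \<le> \<epsilon> / 2"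
          proof -
            have "\<bar>S F - S F0\<bar> < \<epsilon> / (2 * (C + 1))" using \<eta>2(2)[of F] F dF by (simp add: abs_minus_commute)
            then have "\<bar>S F - S F0\<bar> * C \<le> \<epsilon> / (2 * (C + 1)) * C" using C0 by (intro mult_right_mono) auto
            also have "\<epsilon> / (2 * (C + 1)) * C \<le> \<epsilon> / 2" using C0 e by (simp add: field_simps)
            finally show ?thesis .
          qed
          from le a1 a2 show "Lp_dist M p (\<Phi> F0) (\<Phi> F) < \<epsilon>" by linarith
        qed
      qed
    next
      show "\<forall>z\<in>topspace (Lp_topology M p). \<exists>U\<in>\<U>. \<Phi> z \<in> U \<and> z \<in> U"
      proof
        fix F assume "F \<in> topspace (Lp_topology M p)"
        then have F: "F \<in> Lp_space M p" by (simp add: T)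
        have "Lp_dist M p F (\<Phi> F) \<le> Lp_dist M p F (g F) + Lp_dist M p (g F) (\<Phi> F)"
          by (rule L.triangle[OF F gS[OF F] \<Phi>S[OF F]])
        moreover have "\<delta> F \<le> r F / 4" by (simp add: \<delta>_def)
        ultimately have lt: "Lp_dist M p F (\<Phi> F) < 11/12 * r F" using gnear[OF F] \<Phi>g[OF F] by linarith
        obtain U where U: "U \<in> \<U>" "L.mball F (11/12 * r F) \<subseteq> U" using r3[OF F, of "11/12 * r F"] r1[OF F] by auto
        have "\<Phi> F \<in> L.mball F (11/12 * r F)" "F \<in> L.mball F (11/12 * r F)"
          using lt F \<Phi>S[OF F] r1[OF F] by auto
        then show "\<exists>U\<in>\<U>. \<Phi> F \<in> U \<and> F \<in> U" using U by blast
      qed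
    next
      show "\<Phi> ` topspace (Lp_topology M p) \<inter> (A \<union> B) = {}"
      proof (rule ccontr)
        assume "\<Phi> ` topspace (Lp_topology M p) \<inter> (A \<union> B) \<noteq> {}"
        then obtain F where F: "F \<in> Lp_space M p" and FAB: "\<Phi> F \<in> A \<union> B" by (auto simp: T)
        show False
        proof (cases "\<Phi> F \<in> B")
          case True
          have "\<beta> (g F) \<le> Lp_dist M p (g F) (\<Phi> F)" by (rule \<beta>1[OF True])
          moreover have "Lp_dist M p (g F) (\<Phi> F) < \<delta> F" by (rule \<Phi>g[OF F])
          moreover have "\<delta> F \<le> \<beta> (g F) / 2" by (simp add: \<delta>_def)
          moreover have "0 < \<beta> (g F)" by (rule \<beta>3[OF gS[OF F] gnB[OF F]])
          ultimately show False by linarith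
        next
          case False
          then have inA: "\<Phi> F \<in> A" using FAB by simp
          define k where "k = kk (S F) (h F)"
          have "k \<in> \<Phi> F" using Lp_class_mem[OF kL[OF F]] by (simp add: \<Phi>_def k_def)
          from xi_van[OF inA this] have van: "AE x in M. x \<in> mball_of M d a (\<xi> (\<Phi> F)) \<longrightarrow> k x = 0" .
          define \<rho> where "\<rho> = min (\<xi> (\<Phi> F)) (r0 / (S F + 1))"
          have \<rho>0: "0 < \<rho>" using xi_pos[OF inA] r0 S1[OF F] by (simp add: \<rho>_def)
          have "AE x in M. x \<notin> mball_of M d a \<rho>"
            using van AE_not_in[OF a_null]
          proof eventually_elim
            fix x assume v: "x \<in> mball_of M d a (\<xi> (\<Phi> F)) \<longrightarrow> k x = 0" and xa: "x \<notin> {a}"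
            show "x \<notin> mball_of M d a \<rho>"
            proof
              assume xin: "x \<in> mball_of M d a \<rho>"
              then have xs: "x \<in> space M" and dx: "d a x < \<rho>" by (auto simp: mball_of_def)
              have "x \<in> mball_of M d a (\<xi> (\<Phi> F))" using xs dx by (simp add: mball_of_def \<rho>_def)
              with v have "k x = 0" by simp
              moreover have "w (S F) x = 1"
                using w_one[of "S F" x] S1[OF F] xs xa dx by (simp add: \<rho>_def)
              ultimately show False by (simp add: k_def kk_def)
            qed
          qed
          with ball_not_AE[OF \<rho>0] show False by simp
        qed
      qed
    qed
  qed
qed

end

theorem mainTheorem5:
  fixes M :: "'a measure" and d :: "'a \<Rightarrow> 'a \<Rightarrow> real" and p :: real
    and a :: 'a and A B :: "('a \<Rightarrow> real) set set" and \<xi> :: "('a \<Rightarrow> real) set \<Rightarrow> real"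
  assumes "Metric_space (space M) d"
    and "1 \<le> p"
    and "a \<in> X0 M"
    and "\<And>r. r > 0 \<Longrightarrow> mball_of M d a r \<in> sets M \<and> emeasure M (mball_of M d a r) > 0"
    and "\<exists>r'>0. emeasure M (mball_of M d a r') < \<infinity>"
    and "A \<subseteq> Lp_space M p"
    and "\<And>F. F \<in> A \<Longrightarrow> \<xi> F > 0"
    and "\<And>F f. F \<in> A \<Longrightarrow> f \<in> F \<Longrightarrow> AE x in M. x \<in> mball_of M d a (\<xi> F) \<longrightarrow> f x = 0"
    and "Z_set (Lp_topology M p) B"
    and "closedin (Lp_topology M p) (A \<union> B)"
  shows "Z_set (Lp_topology M p) (A \<union> B)"
  proof -
  obtain r0 where r0: "r0 > 0" "emeasure M (mball_of M d a r0) < \<infinity>" using assms(5) by blast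
  interpret Zctx M p d a r0
    by (rule Zctx.intro[OF Lpl.intro Zctx_axioms.intro]) (use assms r0 in auto)
  show ?thesis by (rule Z_main[OF assms(6-10)])
qed

end
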